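(* Consider the Normal Partizan Domination game on a star $K_{1,n}$ whose universal (center) vertex has color $C$, with $a$ leaves of color $A$, $b$ leaves of color $B$ and $c=n-a-b\geq 1$ leaves of color $C$, where $a+b\geq 1$. If $c$ is even, the value equals the value of the game on the star obtained by removing the $c$ leaves of color $C$. If $c$ is odd: if $a=b$ the value is $*$; if $|a-b|=1$ the value is $*2$; if $a\geq b+2$ the value is $\left\{0,\uparrow^{[a-b-1]}*\ \big|\ 0,\uparrow^{[a-b-1]}*\right\}$; if $b\geq a+2$ the value is $\left\{0,\downarrow_{[b-a-1]}*\ \big|\ 0,\downarrow_{[b-a-1]}*\right\}$.
   Context: Normal Partizan Domination game: a finite graph $G$ has each vertex colored $A$, $B$ or $C$. Alice and Bob alternately select a vertex; Alice may only select vertices colored $A$ or $C$, Bob only vertices colored $B$ or $C$. A vertex $u$ dominates $v$ if $u=v$ or $uv$ is an edge. A vertex may be selected only if it is playable, i.e. it dominates at least one vertex not dominated by the previously selected vertices; the game ends when the selected vertices form a dominating set. Under normal play the player unable to move loses. The game is regarded as a partizan combinatorial game with Alice as Left and Bob as Right, and its value is its value in Conway's combinatorial game theory ($\{X\mid Y\}$ has Left options $X$ and Right options $Y$; $G=H$ iff $G+(-H)$ is a second-player win). Notation: $*=\{0\mid 0\}$, $*2=\{0,*\mid 0,*\}$, $\uparrow=\{0\mid *\}$, $\downarrow=\{*\mid 0\}$; $\uparrow^{[1]}=\uparrow$, $\uparrow^{[m]}=\{\uparrow^{[m-1]}\mid *\}$ for $m\geq 2$; $\downarrow_{[1]}=\downarrow$,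 $\downarrow_{[m]}=\{*\mid \downarrow_{[m-1]}\}$ for $m\geq 2$; $J*$ denotes $J+*$. *)

theory Defs
  imports Main
begin

datatype pg = G "pg list" "pg list"   (* G lefts rights = {lefts | rights} *)

fun gplus :: "pg \<Rightarrow> pg \<Rightarrow> pg" where
  "gplus (G ls rs) (G ls' rs') =
     G (map (\<lambda>x. gplus x (G ls' rs')) ls @ map (\<lambda>y. gplus (G ls rs) y) ls')
       (map (\<lambda>x. gplus x (G ls' rs')) rs @ map (\<lambda>y. gplus (G ls rs) y) rs')"

primrec gneg :: "pg \<Rightarrow> pg" where
  "gneg (G ls rs) = G (map gneg rs) (map gneg ls)"

text \<open>wins g = (Left wins moving first, Right wins moving first), normal play.\<close>
primrec wins :: "pg \<Rightarrow> bool \<times> bool" where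
  "wins (G ls rs) = ((\<exists>p \<in> set (map wins ls). \<not> snd p), (\<exists>p \<in> set (map wins rs). \<not> fst p))"

definition second_player_win :: "pg \<Rightarrow> bool" where
  "second_player_win g \<longleftrightarrow> \<not> fst (wins g) \<and> \<not> snd (wins g)"

definition game_eq :: "pg \<Rightarrow> pg \<Rightarrow> bool" (infix "=\<^sub>g" 50) where
  "g =\<^sub>g h \<longleftrightarrow> second_player_win (gplus g (gneg h))"

definition zero_g :: pg where "zero_g = G [] []"
definition star_g :: pg where "star_g = G [zero_g] [zero_g]"
definition star2_g :: pg where "star2_g = G [zero_g, star_g] [zero_g, star_g]"
definition up_g :: pg where "up_g = G [zero_g] [star_g]"
definition down_g :: pg where "down_g = G [star_g] [zero_g]"

text \<open>up_pow m = \<up>^[m], down_pow m = \<down>_[m], for m \<ge> 1 (value at 0 is irrelevant).\<close>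
fun up_pow :: "nat \<Rightarrow> pg" where
  "up_pow 0 = zero_g"
| "up_pow (Suc 0) = up_g"
| "up_pow (Suc (Suc m)) = G [up_pow (Suc m)] [star_g]"

fun down_pow :: "nat \<Rightarrow> pg" where
  "down_pow 0 = zero_g"
| "down_pow (Suc 0) = down_g"
| "down_pow (Suc (Suc m)) = G [star_g] [down_pow (Suc m)]"

datatype color = ColA | ColB | ColC

text \<open>Graph on vertices 0..<N, with adjacency relation adj (symmetric, irreflexive).
  Closed neighbourhood restricted to the vertex set.\<close>
definition cnbhd :: "nat \<Rightarrow> (nat \<Rightarrow> nat \<Rightarrow> bool) \<Rightarrow> nat \<Rightarrow> nat set" where
  "cnbhd N adj v = {u. u < N \<and> (u = v \<or> adj v u)}"

text \<open>Position = set D of vertices dominated so far; a vertex is playable iff its closed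
  neighbourhood is not contained in D.  The first argument is a move budget (fuel); every
  move adds a new vertex to D \<subseteq> {0..<N}, so N moves suffice to reach the end.\<close>
primrec dom_pos :: "nat \<Rightarrow> nat \<Rightarrow> (nat \<Rightarrow> nat \<Rightarrow> bool) \<Rightarrow> (nat \<Rightarrow> color) \<Rightarrow> nat set \<Rightarrow> pg" where
  "dom_pos 0 N adj col D = G [] []"
| "dom_pos (Suc k) N adj col D =
     G (map (\<lambda>v. dom_pos k N adj col (D \<union> cnbhd N adj v))
          (filter (\<lambda>v. col v \<in> {ColA, ColC} \<and> \<not> cnbhd N adj v \<subseteq> D) [0..<N]))
       (map (\<lambda>v. dom_pos k N adj col (D \<union> cnbhd N adj v))
          (filter (\<lambda>v. col v \<in> {ColB, ColC} \<and> \<not> cnbhd N adj v \<subseteq> D) [0..<N]))"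

definition dom_game :: "nat \<Rightarrow> (nat \<Rightarrow> nat \<Rightarrow> bool) \<Rightarrow> (nat \<Rightarrow> color) \<Rightarrow> pg" where
  "dom_game N adj col = dom_pos N N adj col {}"

definition star_adj :: "nat \<Rightarrow> nat \<Rightarrow> bool" where
  "star_adj u v \<longleftrightarrow> (u = 0 \<and> v \<noteq> 0) \<or> (v = 0 \<and> u \<noteq> 0)"

definition star_col :: "nat \<Rightarrow> nat \<Rightarrow> nat \<Rightarrow> color" where
  "star_col a b v = (if v = 0 then ColC else if v \<le> a then ColA else if v \<le> a + b then ColB else ColC)"

definition star_game :: "nat \<Rightarrow> nat \<Rightarrow> nat \<Rightarrow> pg" where
  "star_game a b c = dom_game (a + b + c + 1) star_adj (star_col a b)"

end

theory Submission
  imports Defs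
begin

fun lo :: "pg \<Rightarrow> pg list" where "lo (G l r) = l"
fun ro :: "pg \<Rightarrow> pg list" where "ro (G l r) = r"

lemma size_lo: "x \<in> set (lo g) \<Longrightarrow> size x < size g"
proof (cases g)
  case (G l r)
  assume "x \<in> set (lo g)"
  then have "size x \<le> size_list size l" using G by (auto intro: size_list_estimation')
  then show ?thesis using G by simp
qed
lemma size_ro: "x \<in> set (ro g) \<Longrightarrow> size x < size g"
proof (cases g)
  case (G l r)
  assume "x \<in> set (ro g)"
  then have "size x \<le> size_list size r" using G by (auto intro: size_list_estimation')
  then show ?thesis using G by simp
qed

function le :: "pg \<Rightarrow> pg \<Rightarrow> bool" where
  "le x y = ((\<forall>l\<in>set (lo x). \<not> le y l) \<and> (\<forall>r\<in>set (ro y). \<not> le r x))"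
  by auto
termination by (relation "measure (\<lambda>(x,y). size x + size y)") (auto dest: size_lo size_ro)

declare le.simps[simp del]

lemma wins_le: "(\<not> fst (wins (gplus x (gneg y))) \<longleftrightarrow> le x y) \<and> (\<not> snd (wins (gplus x (gneg y))) \<longleftrightarrow> le y x)"
proof (induction "size x + size y" arbitrary: x y rule: less_induct)
  case less
  obtain xl xr where x: "x = G xl xr" by (cases x)
  obtain yl yr where y: "y = G yl yr" by (cases y)
  have e: "gplus x (gneg y) = G (map (\<lambda>l. gplus l (gneg y)) xl @ map (\<lambda>r. gplus x (gneg r)) yr)
        (map (\<lambda>r. gplus r (gneg y)) xr @ map (\<lambda>l. gplus x (gneg l)) yl)"
    by (simp add: x y)
  have ih1: "\<And>l. l \<in> set xl \<Longrightarrow> (\<not> snd (wins (gplus l (gneg y))) \<longleftrightarrow> le y l)"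
    using less size_lo[of _ x] x by auto
  have ih2: "\<And>r. r \<in> set yr \<Longrightarrow> (\<not> snd (wins (gplus x (gneg r))) \<longleftrightarrow> le r x)"
    using less size_ro[of _ y] y by auto
  have ih3: "\<And>r. r \<in> set xr \<Longrightarrow> (\<not> fst (wins (gplus r (gneg y))) \<longleftrightarrow> le r y)"
    using less size_ro[of _ x] x by auto
  have ih4: "\<And>l. l \<in> set yl \<Longrightarrow> (\<not> fst (wins (gplus x (gneg l))) \<longleftrightarrow> le x l)"
    using less size_lo[of _ y] y by auto
  show ?case
    apply (subst (1 2) e)
    apply (subst (1 2) le.simps)
    using ih1 ih2 ih3 ih4 by (auto simp: x y)
qed

definition eqv :: "pg \<Rightarrow> pg \<Rightarrow> bool" where "eqv x y \<longleftrightarrow> le x y \<and> le y x"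

lemma game_eq_eqv: "game_eq x y \<longleftrightarrow> eqv x y"
  unfolding game_eq_def second_player_win_def eqv_def using wins_le by blast

lemma le_refl: "le x x"
proof (induction x)
  case (G ls rs)
  show ?case
  proof (subst le.simps, intro conjI ballI)
    fix l assume l: "l \<in> set (lo (G ls rs))"
    show "\<not> le (G ls rs) l"
    proof
      assume "le (G ls rs) l"
      then have "\<not> le l l" using l by (subst (asm) le.simps) auto
      then show False using G l by auto
    qed
  next
    fix r assume r: "r \<in> set (ro (G ls rs))"
    show "\<not> le r (G ls rs)"
    proof
      assume "le r (G ls rs)"
      then have "\<not> le r r" using r by (subst (asm) le.simps) auto
      then show False using G r by auto
    qed
  qed
qed

lemma le_trans_aux: "le x y \<and> le y z \<longrightarrow> le x z"
proof (induction "size x + size y + size z" arbitrary: x y z rule: less_induct)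
  case less
  show ?case
  proof
    assume h: "le x y \<and> le y z"
    show "le x z"
    proof (subst le.simps, intro conjI ballI notI)
      fix l assume l: "l \<in> set (lo x)" and zl: "le z l"
      have "le y l" using less[of y z l] h zl size_lo[OF l] by auto
      moreover have "\<not> le y l" using h l by (subst (asm) le.simps[of x y]) auto
      ultimately show False by simp
    next
      fix r assume r: "r \<in> set (ro z)" and rx: "le r x"
      have "le r y" using less[of r x y] h rx size_ro[OF r] by auto
      moreover have "\<not> le r y" using h r by (subst (asm) le.simps[of y z]) auto
      ultimately show False by simp
    qed
  qed
qed

lemma le_trans: "le x y \<Longrightarrow> le y z \<Longrightarrow> le x z"
  using le_trans_aux by blast

lemma nle_L: "l \<in> set (lo x) \<Longrightarrow> le y l \<Longrightarrow> \<not> le x y"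
  by (subst le.simps) auto
lemma nle_R: "r \<in> set (ro y) \<Longrightarrow> le r x \<Longrightarrow> \<not> le x y"
  by (subst le.simps) auto
lemma lf_lo: "l \<in> set (lo g) \<Longrightarrow> \<not> le g l"
  using nle_L le_refl by blast
lemma lf_ro: "r \<in> set (ro g) \<Longrightarrow> \<not> le r g"
  using nle_R le_refl by blast

lemma eqv_refl: "eqv x x" by (simp add: eqv_def le_refl)
lemma eqv_sym: "eqv x y \<Longrightarrow> eqv y x" by (simp add: eqv_def)
lemma eqv_trans: "eqv x y \<Longrightarrow> eqv y z \<Longrightarrow> eqv x z" by (meson eqv_def le_trans)

lemma eqv_opts:
  assumes L1: "\<And>l. l \<in> set (lo g) \<Longrightarrow> (\<exists>l'\<in>set (lo h). eqv l l') \<or> \<not> le h l"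
  and R1: "\<And>r. r \<in> set (ro g) \<Longrightarrow> (\<exists>r'\<in>set (ro h). eqv r r') \<or> \<not> le r h"
  and L2: "\<And>l. l \<in> set (lo h) \<Longrightarrow> (\<exists>l'\<in>set (lo g). eqv l l') \<or> \<not> le g l"
  and R2: "\<And>r. r \<in> set (ro h) \<Longrightarrow> (\<exists>r'\<in>set (ro g). eqv r r') \<or> \<not> le r g"
  shows "eqv g h"
proof -
  have A: "\<not> le y l" if "l \<in> set (lo x)" "(\<exists>l'\<in>set (lo y). eqv l l') \<or> \<not> le y l" for x y l
    using that lf_lo le_trans eqv_def by metis
  have B: "\<not> le r x" if "r \<in> set (ro y)" "(\<exists>r'\<in>set (ro x). eqv r r') \<or> \<not> le r x" for x y r
    using that lf_ro le_trans eqv_def by metis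
  have "le g h" by (subst le.simps) (use A[OF _ L1] B[OF _ R2] in blast)
  moreover have "le h g" by (subst le.simps) (use A[OF _ L2] B[OF _ R1] in blast)
  ultimately show ?thesis by (simp add: eqv_def)
qed

lemma le_neg: "le (gneg y) (gneg x) \<longleftrightarrow> le x y"
proof (induction "size x + size y" arbitrary: x y rule: less_induct)
  case less
  obtain xl xr where x: "x = G xl xr" by (cases x)
  obtain yl yr where y: "y = G yl yr" by (cases y)
  have i1: "le (gneg l) (gneg y) \<longleftrightarrow> le y l" if "l \<in> set xl" for l
    using less[of y l] size_lo[of l x] that x by auto
  have i2: "le (gneg x) (gneg r) \<longleftrightarrow> le r x" if "r \<in> set yr" for r
    using less[of r x] size_ro[of r y] that y by auto
  show ?case
    apply (subst (1 2) le.simps)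
    using i1 i2 by (auto simp: x y)
qed

lemma eqv_neg: "eqv x y \<Longrightarrow> eqv (gneg x) (gneg y)"
  by (simp add: eqv_def le_neg)

lemma gplus_zero: "gplus x zero_g = x"
proof (induction x)
  case (G ls rs)
  then show ?case by (simp add: zero_g_def map_idI)
qed

lemma gneg_gplus: "gneg (gplus x y) = gplus (gneg x) (gneg y)"
proof (induction "size x + size y" arbitrary: x y rule: less_induct)
  case less
  obtain xl xr where x: "x = G xl xr" by (cases x)
  obtain yl yr where y: "y = G yl yr" by (cases y)
  have i1: "gneg (gplus l y) = gplus (gneg l) (gneg y)" if "l \<in> set xl \<or> l \<in> set xr" for l
    using less[of l y] size_lo[of l x] size_ro[of l x] that x by auto
  have i2: "gneg (gplus x r) = gplus (gneg x) (gneg r)" if "r \<in> set yl \<or> r \<in> set yr" for r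
    using less[of x r] size_lo[of r y] size_ro[of r y] that y by auto
  show ?case using i1 i2 by (simp add: x y)
qed

lemma gneg_up: "gneg (up_pow m) = down_pow m"
  by (induction m rule: up_pow.induct) (auto simp: zero_g_def up_g_def down_g_def star_g_def)

function P :: "nat \<Rightarrow> nat \<Rightarrow> nat \<Rightarrow> pg" where
  "P a b c = (if a = 0 \<and> b = 0 \<and> c = 0 then G [] [] else
     G (zero_g # (if 0 < a then [P (a-1) b c] else []) @ (if 0 < c then [P a b (c-1)] else []))
       (zero_g # (if 0 < b then [P a (b-1) c] else []) @ (if 0 < c then [P a b (c-1)] else [])))"
  by pat_completeness auto
termination by (relation "measure (\<lambda>(a,b,c). a+b+c)") auto

declare P.simps[simp del]

lemma P000: "P 0 0 0 = zero_g" by (subst P.simps) (simp add: zero_g_def)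

lemma P_lo: "\<not> (a = 0 \<and> b = 0 \<and> c = 0) \<Longrightarrow> set (lo (P a b c)) =
   insert zero_g ((if 0 < a then {P (a-1) b c} else {}) \<union> (if 0 < c then {P a b (c-1)} else {}))"
  by (subst P.simps) auto
lemma P_ro: "\<not> (a = 0 \<and> b = 0 \<and> c = 0) \<Longrightarrow> set (ro (P a b c)) =
   insert zero_g ((if 0 < b then {P a (b-1) c} else {}) \<union> (if 0 < c then {P a b (c-1)} else {}))"
  by (subst P.simps) auto

lemma P_neg: "gneg (P a b c) = P b a c"
proof (induction "a+b+c" arbitrary: a b c rule: less_induct)
  case less
  show ?case
    apply (subst (1 2) P.simps)
    using less by (auto simp: zero_g_def)
qed

lemma starlike_le: "set (lo x) = {zero_g} \<Longrightarrow> set (ro x) = {zero_g} \<Longrightarrow>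
   set (lo y) = {zero_g} \<Longrightarrow> set (ro y) = {zero_g} \<Longrightarrow> le x y"
proof -
  assume a: "set (lo x) = {zero_g}" "set (ro x) = {zero_g}" "set (lo y) = {zero_g}" "set (ro y) = {zero_g}"
  have "\<not> le y zero_g" by (rule nle_L[of zero_g]) (simp_all add: a le_refl)
  moreover have "\<not> le zero_g x" by (rule nle_R[of zero_g]) (simp_all add: a le_refl)
  ultimately show ?thesis by (subst le.simps) (simp add: a)
qed

lemma starlike_eqv: "set (lo x) = {zero_g} \<Longrightarrow> set (ro x) = {zero_g} \<Longrightarrow>
   set (lo y) = {zero_g} \<Longrightarrow> set (ro y) = {zero_g} \<Longrightarrow> eqv x y"
  by (simp add: eqv_def starlike_le)

lemma lo_P001: "set (lo (P 0 0 1)) = {zero_g}" by (simp add: P_lo P000)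
lemma ro_P001: "set (ro (P 0 0 1)) = {zero_g}" by (simp add: P_ro P000)
lemma lo_P100: "set (lo (P 1 0 0)) = {zero_g}" by (simp add: P_lo P000)
lemma ro_P100: "set (ro (P 1 0 0)) = {zero_g}" by (simp add: P_ro P000)
lemma lo_P010: "set (lo (P 0 1 0)) = {zero_g}" by (simp add: P_lo P000)
lemma ro_P010: "set (ro (P 0 1 0)) = {zero_g}" by (simp add: P_ro P000)
lemma lo_star: "set (lo star_g) = {zero_g}" by (simp add: star_g_def)
lemma ro_star: "set (ro star_g) = {zero_g}" by (simp add: star_g_def)
lemmas starlike = lo_P001 ro_P001 lo_P100 ro_P100 lo_P010 ro_P010 lo_star ro_star

lemma L1: "\<not> (a = 0 \<and> b = 0 \<and> c = 0) \<Longrightarrow> eqv (P (Suc a) (Suc b) c) (P a b c)"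
proof (induction "a+b+c" arbitrary: a b c rule: less_induct)
  case less
  note nz = less.prems
  have Glo: "set (lo (P (Suc a) (Suc b) c)) = insert zero_g ({P a (Suc b) c} \<union> (if 0 < c then {P (Suc a) (Suc b) (c-1)} else {}))"
    by (simp add: P_lo)
  have Gro: "set (ro (P (Suc a) (Suc b) c)) = insert zero_g ({P (Suc a) b c} \<union> (if 0 < c then {P (Suc a) (Suc b) (c-1)} else {}))"
    by (simp add: P_ro)
  have Hlo: "set (lo (P a b c)) = insert zero_g ((if 0 < a then {P (a-1) b c} else {}) \<union> (if 0 < c then {P a b (c-1)} else {}))"
    using nz by (simp add: P_lo)
  have Hro: "set (ro (P a b c)) = insert zero_g ((if 0 < b then {P a (b-1) c} else {}) \<union> (if 0 < c then {P a b (c-1)} else {}))"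
    using nz by (simp add: P_ro)
  have z1: "zero_g \<in> set (lo (P a b c))" "zero_g \<in> set (ro (P a b c))"
    "zero_g \<in> set (lo (P (Suc a) (Suc b) c))" "zero_g \<in> set (ro (P (Suc a) (Suc b) c))"
    using Hlo Hro Glo Gro by auto
  have g1: "\<not> le (P a b c) (P a (Suc b) c)"
    by (rule nle_R[where r="P a b c"]) (simp_all add: P_ro le_refl)
  have g2: "\<not> le (P (Suc a) b c) (P a b c)"
    by (rule nle_L[where l="P a b c"]) (simp_all add: P_lo le_refl)
  have cc: "(\<exists>l'\<in>set (lo (P a b c)). eqv (P (Suc a) (Suc b) (c-1)) l') \<and> (\<exists>l'\<in>set (ro (P a b c)). eqv (P (Suc a) (Suc b) (c-1)) l')
       \<and> (\<exists>l'\<in>set (lo (P (Suc a) (Suc b) c)). eqv (P a b (c-1)) l') \<and> (\<exists>l'\<in>set (ro (P (Suc a) (Suc b) c)). eqv (P a b (c-1)) l')"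
    if "0 < c" "\<not> (a = 0 \<and> b = 0 \<and> c - 1 = 0)"
  proof -
    have "eqv (P (Suc a) (Suc b) (c-1)) (P a b (c-1))" using less.hyps[of a b "c-1"] that by auto
    then show ?thesis using that Hlo Hro Glo Gro eqv_sym by auto
  qed
  have sp: "\<not> le (P 0 0 1) (P 1 1 0) \<and> \<not> le (P 1 1 0) (P 0 0 1)"
  proof
    have e1: "le (P 1 0 0) (P 0 0 1)" by (rule starlike_le[OF lo_P100 ro_P100 lo_P001 ro_P001])
    have e2: "le (P 0 0 1) (P 0 1 0)" by (rule starlike_le[OF lo_P001 ro_P001 lo_P010 ro_P010])
    show "\<not> le (P 0 0 1) (P 1 1 0)"
      by (rule nle_R[where r="P 1 0 0", OF _ e1]) (simp add: P_ro)
    show "\<not> le (P 1 1 0) (P 0 0 1)"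
      by (rule nle_L[where l="P 0 1 0", OF _ e2]) (simp add: P_lo)
  qed
  have aa: "\<exists>l'\<in>set (lo (P (Suc a) (Suc b) c)). eqv (P (a-1) b c) l'" if "0 < a"
  proof (cases "a - 1 = 0 \<and> b = 0 \<and> c = 0")
    case True then have "P (a-1) b c = zero_g" by (simp add: P000)
    then show ?thesis using z1(3) eqv_refl by metis
  next
    case False
    then have "eqv (P (Suc (a-1)) (Suc b) c) (P (a-1) b c)" using less.hyps[of "a-1" b c] that by auto
    then show ?thesis using Glo that eqv_sym by auto
  qed
  have bb: "\<exists>l'\<in>set (ro (P (Suc a) (Suc b) c)). eqv (P a (b-1) c) l'" if "0 < b"
  proof (cases "a = 0 \<and> b - 1 = 0 \<and> c = 0")
    case True then have "P a (b-1) c = zero_g" by (simp add: P000)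
    then show ?thesis using z1(4) eqv_refl by metis
  next
    case False
    then have "eqv (P (Suc a) (Suc (b-1)) c) (P a (b-1) c)" using less.hyps[of a "b-1" c] that by auto
    then show ?thesis using Gro that eqv_sym by auto
  qed
  have cG: "(\<exists>l'\<in>set (lo (P a b c)). eqv (P (Suc a) (Suc b) (c-1)) l') \<or> \<not> le (P a b c) (P (Suc a) (Suc b) (c-1))"
     "(\<exists>l'\<in>set (ro (P a b c)). eqv (P (Suc a) (Suc b) (c-1)) l') \<or> \<not> le (P (Suc a) (Suc b) (c-1)) (P a b c)"
    if "0 < c"
  proof -
    show "(\<exists>l'\<in>set (lo (P a b c)). eqv (P (Suc a) (Suc b) (c-1)) l') \<or> \<not> le (P a b c) (P (Suc a) (Suc b) (c-1))"
    proof (cases "a = 0 \<and> b = 0 \<and> c - 1 = 0")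
      case True then have "a = 0" "b = 0" "c = 1" using that by auto
      then show ?thesis using sp by simp
    next
      case False then show ?thesis using cc that by blast
    qed
    show "(\<exists>l'\<in>set (ro (P a b c)). eqv (P (Suc a) (Suc b) (c-1)) l') \<or> \<not> le (P (Suc a) (Suc b) (c-1)) (P a b c)"
    proof (cases "a = 0 \<and> b = 0 \<and> c - 1 = 0")
      case True then have "a = 0" "b = 0" "c = 1" using that by auto
      then show ?thesis using sp by simp
    next
      case False then show ?thesis using cc that by blast
    qed
  qed
  have cH: "(\<exists>l'\<in>set (lo (P (Suc a) (Suc b) c)). eqv (P a b (c-1)) l')"
     "(\<exists>l'\<in>set (ro (P (Suc a) (Suc b) c)). eqv (P a b (c-1)) l')"
    if "0 < c"
  proof -
    show "(\<exists>l'\<in>set (lo (P (Suc a) (Suc b) c)). eqv (P a b (c-1)) l')"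
    proof (cases "a = 0 \<and> b = 0 \<and> c - 1 = 0")
      case True then have "P a b (c-1) = zero_g" by (simp add: P000)
      then show ?thesis using z1(3) eqv_refl by metis
    next
      case False then show ?thesis using cc that by blast
    qed
    show "(\<exists>l'\<in>set (ro (P (Suc a) (Suc b) c)). eqv (P a b (c-1)) l')"
    proof (cases "a = 0 \<and> b = 0 \<and> c - 1 = 0")
      case True then have "P a b (c-1) = zero_g" by (simp add: P000)
      then show ?thesis using z1(4) eqv_refl by metis
    next
      case False then show ?thesis using cc that by blast
    qed
  qed
  show ?case
  proof (rule eqv_opts)
    fix l assume "l \<in> set (lo (P (Suc a) (Suc b) c))"
    then consider "l = zero_g" | "l = P a (Suc b) c" | "0 < c" "l = P (Suc a) (Suc b) (c-1)"
      using Glo by (auto split: if_splits)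
    then show "(\<exists>l'\<in>set (lo (P a b c)). eqv l l') \<or> \<not> le (P a b c) l"
      by cases (use z1 g1 cG eqv_refl in metis)+
  next
    fix r assume "r \<in> set (ro (P (Suc a) (Suc b) c))"
    then consider "r = zero_g" | "r = P (Suc a) b c" | "0 < c" "r = P (Suc a) (Suc b) (c-1)"
      using Gro by (auto split: if_splits)
    then show "(\<exists>r'\<in>set (ro (P a b c)). eqv r r') \<or> \<not> le r (P a b c)"
      by cases (use z1 g2 cG eqv_refl in metis)+
  next
    fix l assume "l \<in> set (lo (P a b c))"
    then consider "l = zero_g" | "0 < a" "l = P (a-1) b c" | "0 < c" "l = P a b (c-1)"
      using Hlo by (auto split: if_splits)
    then show "(\<exists>l'\<in>set (lo (P (Suc a) (Suc b) c)). eqv l l') \<or> \<not> le (P (Suc a) (Suc b) c) l"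
      by cases (use z1 aa cH eqv_refl in metis)+
  next
    fix r assume "r \<in> set (ro (P a b c))"
    then consider "r = zero_g" | "0 < b" "r = P a (b-1) c" | "0 < c" "r = P a b (c-1)"
      using Hro by (auto split: if_splits)
    then show "(\<exists>r'\<in>set (ro (P (Suc a) (Suc b) c)). eqv r r') \<or> \<not> le r (P (Suc a) (Suc b) c)"
      by cases (use z1 bb cH eqv_refl in metis)+
  qed
qed

lemma L1k: "\<not> (a = 0 \<and> b = 0 \<and> c = 0) \<Longrightarrow> eqv (P (k+a) (k+b) c) (P a b c)"
proof (induction k)
  case 0 then show ?case by (simp add: eqv_refl)
next
  case (Suc k)
  have "\<not> (k+a = 0 \<and> k+b = 0 \<and> c = 0)" using Suc.prems by auto
  then have "eqv (P (Suc (k+a)) (Suc (k+b)) c) (P (k+a) (k+b) c)" by (rule L1)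
  then show ?case using Suc eqv_trans by auto
qed

lemma lo00: "0 < c \<Longrightarrow> set (lo (P 0 0 c)) = {zero_g, P 0 0 (c-1)}" by (simp add: P_lo)
lemma ro00: "0 < c \<Longrightarrow> set (ro (P 0 0 c)) = {zero_g, P 0 0 (c-1)}" by (simp add: P_ro)

lemma L2: "eqv (P 0 0 (Suc (Suc (Suc n)))) (P 0 0 (Suc n))"
proof (induction n)
  case 0
  have a1: "\<not> le (P 0 0 1) (P 0 0 2)" by (rule nle_R[where r="P 0 0 1"]) (simp_all add: ro00 le_refl)
  have a2: "\<not> le (P 0 0 2) (P 0 0 1)" by (rule nle_L[where l="P 0 0 1"]) (simp_all add: lo00 le_refl)
  show ?case
    apply (rule eqv_opts)
    using a1 a2 by (auto simp: lo00 ro00 P000 eqv_refl numeral_2_eq_2)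
next
  case (Suc n)
  show ?case
    apply (rule eqv_opts)
    using Suc eqv_sym by (auto simp: lo00 ro00 eqv_refl)
qed

lemma L5: "le (P d 0 1) (P (Suc d) 0 0)"
proof (induction d)
  case 0
  show ?case by (rule starlike_le) (simp_all add: P_lo P_ro P000)
next
  case (Suc d)
  have lo1: "set (lo (P (Suc d) 0 1)) = {zero_g, P d 0 1, P (Suc d) 0 0}" by (auto simp: P_lo)
  have ro1: "set (ro (P (Suc d) 0 1)) = {zero_g, P (Suc d) 0 0}" by (simp add: P_ro)
  have lo2: "set (lo (P (Suc (Suc d)) 0 0)) = {zero_g, P (Suc d) 0 0}" by (simp add: P_lo)
  have ro2: "set (ro (P (Suc (Suc d)) 0 0)) = {zero_g}" by (simp add: P_ro)
  have "\<not> le (P (Suc (Suc d)) 0 0) zero_g" by (rule nle_L[of zero_g]) (simp_all add: lo2 le_refl)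
  moreover have "\<not> le (P (Suc (Suc d)) 0 0) (P (Suc d) 0 0)" by (rule lf_lo) (simp add: lo2)
  moreover have "\<not> le (P (Suc (Suc d)) 0 0) (P d 0 1)" by (rule nle_L[of "P (Suc d) 0 0", OF _ Suc]) (simp add: lo2)
  moreover have "\<not> le zero_g (P (Suc d) 0 1)" by (rule nle_R[of zero_g, OF _ le_refl]) (unfold ro1, simp)
  ultimately show ?case by (subst le.simps) (simp only: lo1 ro2, simp)
qed

lemma L6: "eqv (P d 0 1) (G [zero_g, P d 0 0] [zero_g, P d 0 0])"
proof (rule eqv_opts)
  have lo1: "set (lo (P d 0 1)) = {zero_g, P d 0 0} \<union> (if 0 < d then {P (d-1) 0 1} else {})" by (auto simp: P_lo)
  have ro1: "set (ro (P d 0 1)) = {zero_g, P d 0 0}" by (simp add: P_ro)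
  have x: "\<not> le (G [zero_g, P d 0 0] [zero_g, P d 0 0]) (P (d-1) 0 1)" if "0 < d"
    by (rule nle_L[of "P d 0 0"]) (use L5[of "d-1"] that in auto)
  fix l assume "l \<in> set (lo (P d 0 1))"
  then show "(\<exists>l'\<in>set (lo (G [zero_g, P d 0 0] [zero_g, P d 0 0])). eqv l l') \<or> \<not> le (G [zero_g, P d 0 0] [zero_g, P d 0 0]) l"
    using x lo1 eqv_refl by (auto split: if_splits)
next
  fix r assume "r \<in> set (ro (P d 0 1))"
  then show "(\<exists>r'\<in>set (ro (G [zero_g, P d 0 0] [zero_g, P d 0 0])). eqv r r') \<or> \<not> le r (G [zero_g, P d 0 0] [zero_g, P d 0 0])"
    using eqv_refl by (auto simp: P_ro)
next
  fix l assume "l \<in> set (lo (G [zero_g, P d 0 0] [zero_g, P d 0 0]))"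
  then show "(\<exists>l'\<in>set (lo (P d 0 1)). eqv l l') \<or> \<not> le (P d 0 1) l"
    using eqv_refl by (auto simp: P_lo)
next
  fix r assume "r \<in> set (ro (G [zero_g, P d 0 0] [zero_g, P d 0 0]))"
  then show "(\<exists>r'\<in>set (ro (P d 0 1)). eqv r r') \<or> \<not> le r (P d 0 1)"
    using eqv_refl by (auto simp: P_ro)
qed

lemma L3: "0 < d \<Longrightarrow> eqv (P d 0 (Suc (Suc c))) (P d 0 c)"
proof (induction "d+c" arbitrary: d c rule: less_induct)
  case less
  define H where "H = P d 0 c"
  define Gm where "Gm = P d 0 (Suc (Suc c))"
  have Glo: "set (lo Gm) = {zero_g, P (d-1) 0 (Suc (Suc c)), P d 0 (Suc c)}"
    using less.prems by (auto simp: Gm_def P_lo)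
  have Gro: "set (ro Gm) = {zero_g, P d 0 (Suc c)}"
    using less.prems by (auto simp: Gm_def P_ro)
  have Hlo: "set (lo H) = {zero_g, P (d-1) 0 c} \<union> (if 0 < c then {P d 0 (c-1)} else {})"
    using less.prems by (auto simp: H_def P_lo)
  have Hro: "set (ro H) = {zero_g} \<union> (if 0 < c then {P d 0 (c-1)} else {})"
    using less.prems by (auto simp: H_def P_ro)
  have m1: "((\<exists>l'\<in>set (lo H). eqv (P (d-1) 0 (Suc (Suc c))) l') \<or> \<not> le H (P (d-1) 0 (Suc (Suc c))))
      \<and> ((\<exists>l'\<in>set (lo Gm). eqv (P (d-1) 0 c) l') \<or> \<not> le Gm (P (d-1) 0 c))"
  proof (cases "0 < d - 1")
    case True
    then have "eqv (P (d-1) 0 (Suc (Suc c))) (P (d-1) 0 c)" using less.hyps[of "d-1" c] less.prems by auto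
    then show ?thesis using Hlo Glo eqv_sym by auto
  next
    case False
    then have d1: "d = 1" using less.prems by auto
    show ?thesis
    proof (cases c)
      case 0
      have "le (P 0 0 1) (P 1 0 0)" using L5[of 0] by simp
      then have "\<not> le H (P (d-1) 0 (Suc (Suc c)))"
        by (intro nle_R[of "P 0 0 1"]) (auto simp: H_def d1 0 ro00 numeral_2_eq_2)
      moreover have "P (d-1) 0 c = zero_g" using d1 0 by (simp add: P000)
      ultimately show ?thesis using Glo eqv_refl by auto
    next
      case (Suc n)
      then have "eqv (P (d-1) 0 (Suc (Suc c))) (P (d-1) 0 c)" using L2[of n] d1 by simp
      then show ?thesis using Hlo Glo eqv_sym by auto
    qed
  qed
  have m2: "((\<exists>l'\<in>set (lo H). eqv (P d 0 (Suc c)) l') \<or> \<not> le H (P d 0 (Suc c)))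
     \<and> ((\<exists>l'\<in>set (ro H). eqv (P d 0 (Suc c)) l') \<or> \<not> le (P d 0 (Suc c)) H)"
  proof (cases c)
    case 0
    have "\<not> le H (P d 0 (Suc c))"
      by (rule nle_R[of H, OF _ le_refl]) (use less.prems in \<open>simp add: H_def 0 P_ro\<close>)
    moreover have "\<not> le (P d 0 (Suc c)) H"
      by (rule nle_L[of H, OF _ le_refl]) (use less.prems in \<open>simp add: H_def 0 P_lo\<close>)
    ultimately show ?thesis by auto
  next
    case (Suc n)
    then have "eqv (P d 0 (Suc (Suc n))) (P d 0 n)" using less.hyps[of d n] less.prems by auto
    then show ?thesis using Hlo Hro Suc by auto
  qed
  have m3: "0 < c \<Longrightarrow> (\<exists>l'\<in>set (lo Gm). eqv (P d 0 (c-1)) l') \<and> (\<exists>l'\<in>set (ro Gm). eqv (P d 0 (c-1)) l')"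
  proof -
    assume c: "0 < c"
    then have "eqv (P d 0 (Suc (Suc (c-1)))) (P d 0 (c-1))" using less.hyps[of d "c-1"] less.prems by auto
    then show ?thesis using Glo Gro c eqv_sym by (auto simp: Suc_diff_1)
  qed
  have "eqv Gm H"
  proof (rule eqv_opts)
    fix l assume "l \<in> set (lo Gm)"
    then show "(\<exists>l'\<in>set (lo H). eqv l l') \<or> \<not> le H l"
      using Glo Hlo m1 m2 eqv_refl by auto
  next
    fix r assume "r \<in> set (ro Gm)"
    then show "(\<exists>r'\<in>set (ro H). eqv r r') \<or> \<not> le r H"
      using Gro Hro m2 eqv_refl by auto
  next
    fix l assume "l \<in> set (lo H)"
    then show "(\<exists>l'\<in>set (lo Gm). eqv l l') \<or> \<not> le Gm l"
      using Glo Hlo m1 m3 eqv_refl by (auto split: if_splits)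
  next
    fix r assume "r \<in> set (ro H)"
    then show "(\<exists>r'\<in>set (ro Gm). eqv r r') \<or> \<not> le r Gm"
      using Gro Hro m3 eqv_refl by (auto split: if_splits)
  qed
  then show ?case by (simp add: Gm_def H_def)
qed

lemma le0_up: "le zero_g (up_pow m)"
proof (cases m)
  case 0 then show ?thesis by (simp add: le_refl)
next
  case (Suc k)
  have u: "up_pow (Suc k) = G [up_pow k] [star_g]"
    by (cases k) (simp_all add: up_g_def)
  have "\<not> le star_g zero_g" by (rule nle_L[of zero_g, OF _ le_refl]) (simp add: star_g_def)
  then show ?thesis by (subst le.simps) (simp add: Suc u zero_g_def)
qed

lemma up_Suc: "up_pow (Suc k) = G [up_pow k] [star_g]"
  by (cases k) (simp_all add: up_g_def)

lemma ss_eq: "gplus star_g star_g = G [star_g, star_g] [star_g, star_g]"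
  by (simp add: star_g_def zero_g_def)
lemma nle_0s: "\<not> le zero_g star_g" by (rule nle_R[of zero_g, OF _ le_refl]) (simp add: star_g_def)
lemma nle_s0: "\<not> le star_g zero_g" by (rule nle_L[of zero_g, OF _ le_refl]) (simp add: star_g_def)
lemma ss_le1: "le (gplus star_g star_g) zero_g"
  by (subst le.simps) (simp add: ss_eq nle_0s[unfolded zero_g_def] zero_g_def)
lemma ss_le2: "le zero_g (gplus star_g star_g)"
  by (subst le.simps) (simp add: ss_eq nle_s0[unfolded zero_g_def] zero_g_def)


lemma L4: "eqv (P (Suc m) 0 0) (gplus (up_pow m) star_g)"
proof (induction m)
  case 0
  have "gplus (up_pow 0) star_g = star_g" by (simp add: zero_g_def star_g_def)
  moreover have "eqv (P 1 0 0) star_g" by (rule starlike_eqv[OF lo_P100 ro_P100 lo_star ro_star])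
  ultimately show ?case by simp
next
  case (Suc m)
  define H where "H = gplus (up_pow (Suc m)) star_g"
  define Gm where "Gm = P (Suc (Suc m)) 0 0"
  have Hlo: "set (lo H) = {gplus (up_pow m) star_g, up_pow (Suc m)}"
    by (simp add: H_def up_Suc star_g_def gplus_zero)
  have Hro: "set (ro H) = {gplus star_g star_g, up_pow (Suc m)}"
    by (simp add: H_def up_Suc star_g_def gplus_zero)
  have Glo: "set (lo Gm) = {zero_g, P (Suc m) 0 0}" by (simp add: Gm_def P_lo)
  have Gro: "set (ro Gm) = {zero_g}" by (simp add: Gm_def P_ro)
  have f1: "\<not> le H zero_g" by (rule nle_L[of "up_pow (Suc m)", OF _ le0_up]) (simp add: Hlo)
  have f2: "\<not> le zero_g H" by (rule nle_R[of "gplus star_g star_g", OF _ ss_le1]) (simp add: Hro)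
  have "\<not> le Gm zero_g" by (rule nle_L[of zero_g, OF _ le_refl]) (simp add: Glo)
  moreover have "\<not> le zero_g star_g" by (rule nle_R[of zero_g, OF _ le_refl]) (simp add: star_g_def)
  ultimately have "le star_g Gm" by (subst le.simps) (simp add: Gro star_g_def)
  then have f3: "\<not> le Gm (up_pow (Suc m))" by (rule nle_R[rotated]) (simp add: up_Suc)
  have f4: "\<not> le (gplus star_g star_g) Gm" by (rule nle_R[of zero_g, OF _ ss_le2]) (simp add: Gro)
  have f5: "\<not> le (up_pow (Suc m)) Gm" by (rule nle_R[of zero_g, OF _ le0_up]) (simp add: Gro)
  have "eqv Gm H"
  proof (rule eqv_opts)
    fix l assume "l \<in> set (lo Gm)"
    then show "(\<exists>l'\<in>set (lo H). eqv l l') \<or> \<not> le H l"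
      using Glo Hlo f1 Suc by auto
  next
    fix r assume "r \<in> set (ro Gm)"
    then show "(\<exists>r'\<in>set (ro H). eqv r r') \<or> \<not> le r H"
      using Gro f2 by auto
  next
    fix l assume "l \<in> set (lo H)"
    then show "(\<exists>l'\<in>set (lo Gm). eqv l l') \<or> \<not> le Gm l"
      using Glo Hlo f3 Suc eqv_sym by auto
  next
    fix r assume "r \<in> set (ro H)"
    then show "(\<exists>r'\<in>set (ro Gm). eqv r r') \<or> \<not> le r Gm"
      using Hro f4 f5 by auto
  qed
  then show ?case by (simp add: Gm_def H_def)
qed


lemma cnb0: "0 < N \<Longrightarrow> cnbhd N star_adj 0 = {..<N}"
  by (auto simp: cnbhd_def star_adj_def)
lemma cnbv: "0 < v \<Longrightarrow> v < N \<Longrightarrow> cnbhd N star_adj v = {0, v}"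
  by (auto simp: cnbhd_def star_adj_def)
lemma cnb_sub: "cnbhd N adj v \<subseteq> {..<N}" by (auto simp: cnbhd_def)

lemma dom_full: "{..<N} \<subseteq> X \<Longrightarrow> dom_pos k N adj col X = zero_g"
proof (cases k)
  case 0 then show ?thesis by (simp add: zero_g_def)
next
  case (Suc k')
  assume X: "{..<N} \<subseteq> X"
  have "\<And>v. cnbhd N adj v \<subseteq> X" using cnb_sub X by blast
  then show ?thesis using Suc by (simp add: zero_g_def)
qed

lemma card_upd:
  assumes "finite {v. R v}" "\<not> R 0"
  shows "card {v. R v \<and> v \<notin> insert 0 (insert w D)} =
    (if R w \<and> w \<notin> D then card {v. R v \<and> v \<notin> D} - 1 else card {v. R v \<and> v \<notin> D})"
proof -
  have e: "{v. R v \<and> v \<notin> insert 0 (insert w D)} = {v. R v \<and> v \<notin> D} - {w}" using assms(2) by auto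
  have "finite {v. R v \<and> v \<notin> D}" using assms(1) by (rule finite_subset[rotated]) auto
  then show ?thesis unfolding e by (simp add: card_Diff_singleton_if)
qed

lemma card_pos_ex: "0 < card {v. R v \<and> v \<notin> D} \<Longrightarrow> \<exists>v. R v \<and> v \<notin> D"
  by (metis (mono_tags, lifting) card.empty empty_Collect_eq less_irrefl)

lemma card_zero_all: "finite {v. R v} \<Longrightarrow> card {v. R v \<and> v \<notin> D} = 0 \<Longrightarrow> R v \<Longrightarrow> v \<in> D"
proof -
  assume f: "finite {v. R v}" and c: "card {v. R v \<and> v \<notin> D} = 0" and r: "R v"
  have "finite {v. R v \<and> v \<notin> D}" using f by (rule finite_subset[rotated]) auto
  then have "{v. R v \<and> v \<notin> D} = {}" using c by simp
  then show ?thesis using r by blast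
qed

lemma card_pos_in: "finite {v. R v} \<Longrightarrow> R w \<Longrightarrow> w \<notin> D \<Longrightarrow> 0 < card {v. R v \<and> v \<notin> D}"
proof -
  assume f: "finite {v. R v}" and r: "R w" and w: "w \<notin> D"
  have "finite {v. R v \<and> v \<notin> D}" using f by (rule finite_subset[rotated]) auto
  moreover have "w \<in> {v. R v \<and> v \<notin> D}" using r w by simp
  ultimately show ?thesis by (auto simp: card_gt_0_iff)
qed

definition cA :: "nat \<Rightarrow> nat set \<Rightarrow> nat" where "cA a D = card {v. (1 \<le> v \<and> v \<le> a) \<and> v \<notin> D}"
definition cB :: "nat \<Rightarrow> nat \<Rightarrow> nat set \<Rightarrow> nat" where "cB a b D = card {v. (a < v \<and> v \<le> a + b) \<and> v \<notin> D}"
definition cC :: "nat \<Rightarrow> nat \<Rightarrow> nat \<Rightarrow> nat set \<Rightarrow> nat" where "cC a b c D = card {v. (a + b < v \<and> v \<le> a + b + c) \<and> v \<notin> D}"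

lemma finA: "finite {v::nat. 1 \<le> v \<and> v \<le> a}" by (rule finite_subset[of _ "{..a}"]) auto
lemma finB: "finite {v::nat. a < v \<and> v \<le> a + b}" by (rule finite_subset[of _ "{..a+b}"]) auto
lemma finC: "finite {v::nat. a + b < v \<and> v \<le> a + b + c}" by (rule finite_subset[of _ "{..a+b+c}"]) auto

lemma cA_upd: "cA a (insert 0 (insert w D)) = (if (1 \<le> w \<and> w \<le> a) \<and> w \<notin> D then cA a D - 1 else cA a D)"
  unfolding cA_def by (rule card_upd[OF finA]) simp
lemma cB_upd: "cB a b (insert 0 (insert w D)) = (if (a < w \<and> w \<le> a + b) \<and> w \<notin> D then cB a b D - 1 else cB a b D)"
  unfolding cB_def by (rule card_upd[OF finB]) simp
lemma cC_upd: "cC a b c (insert 0 (insert w D)) = (if (a + b < w \<and> w \<le> a + b + c) \<and> w \<notin> D then cC a b c D - 1 else cC a b c D)"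
  unfolding cC_def by (rule card_upd[OF finC]) simp

lemma pos:
  fixes a b c k :: nat
  assumes "N = a + b + c + 1"
  shows "D \<subseteq> {..<N} \<Longrightarrow> (0 \<in> D \<or> D = {}) \<Longrightarrow> (0 \<notin> D \<Longrightarrow> 1 \<le> cA a D + cB a b D + cC a b c D)
    \<Longrightarrow> cA a D + cB a b D + cC a b c D \<le> k
    \<Longrightarrow> eqv (dom_pos k N star_adj (star_col a b) D) (P (cA a D) (cB a b D) (cC a b c D))"
proof (induction k arbitrary: D)
  case 0
  then have "0 \<in> D" by auto
  with 0 show ?case by (simp add: P000[unfolded zero_g_def] eqv_refl)
next
  case (Suc k)
  define ca where "ca = cA a D"
  define cb where "cb = cB a b D"
  define cc where "cc = cC a b c D"
  define col where "col = star_col a b"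
  define f where "f = (\<lambda>v. dom_pos k N star_adj col (D \<union> cnbhd N star_adj v))"
  have N0: "0 < N" using assms by simp
  show ?case
  proof (cases "ca + cb + cc = 0")
    case True
    then have z: "ca = 0" "cb = 0" "cc = 0" by auto
    have "0 \<in> D" using Suc.prems(3) True ca_def cb_def cc_def by force
    have "v \<in> D" if vN: "v < N" for v
    proof -
      consider "v = 0" | "1 \<le> v \<and> v \<le> a" | "a < v \<and> v \<le> a + b" | "a + b < v \<and> v \<le> a + b + c"
        using vN assms by linarith
      then show ?thesis
      proof cases
        case 1 then show ?thesis using \<open>0 \<in> D\<close> by simp
      next
        case 2 then show ?thesis using card_zero_all[OF finA, of a D v] z ca_def cA_def by simp
      next
        case 3 then show ?thesis using card_zero_all[OF finB, of a b D v] z cb_def cB_def by simp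
      next
        case 4 then show ?thesis using card_zero_all[OF finC, of a b c D v] z cc_def cC_def by simp
      qed
    qed
    then have "{..<N} \<subseteq> D" by auto
    then have "dom_pos (Suc k) N star_adj (star_col a b) D = zero_g" by (rule dom_full)
    then show ?thesis using z by (simp add: ca_def cb_def cc_def P000 eqv_refl)
  next
    case False
    have hnz: "\<not> (ca = 0 \<and> cb = 0 \<and> cc = 0)" using False by auto
    have mv: "v \<notin> D \<and> eqv (f v) (P (cA a (insert 0 (insert v D))) (cB a b (insert 0 (insert v D))) (cC a b c (insert 0 (insert v D))))
         \<and> cA a (insert 0 (insert v D)) + cB a b (insert 0 (insert v D)) + cC a b c (insert 0 (insert v D)) + 1 = ca + cb + cc"
      if v: "0 < v" "v < N" "\<not> cnbhd N star_adj v \<subseteq> D" for v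
    proof -
      have cn: "cnbhd N star_adj v = {0, v}" using v by (simp add: cnbv)
      have vD: "v \<notin> D" using v(3) Suc.prems(2) cn by auto
      have D': "D \<union> cnbhd N star_adj v = insert 0 (insert v D)" using cn by auto
      have sum': "cA a (insert 0 (insert v D)) + cB a b (insert 0 (insert v D)) + cC a b c (insert 0 (insert v D)) + 1 = ca + cb + cc"
      proof -
        consider "1 \<le> v \<and> v \<le> a" | "a < v \<and> v \<le> a + b" | "a + b < v \<and> v \<le> a + b + c"
          using v assms by linarith
        then show ?thesis
        proof cases
          case 1
          then have "0 < ca" using vD unfolding ca_def cA_def by (intro card_pos_in[OF finA]) auto
          then show ?thesis using 1 vD by (simp add: cA_upd cB_upd cC_upd ca_def cb_def cc_def)
        next
          case 2
          then have "0 < cb" using vD unfolding cb_def cB_def by (intro card_pos_in[OF finB]) auto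
          then show ?thesis using 2 vD by (simp add: cA_upd cB_upd cC_upd ca_def cb_def cc_def)
        next
          case 3
          then have "0 < cc" using vD unfolding cc_def cC_def by (intro card_pos_in[OF finC]) auto
          then show ?thesis using 3 vD by (simp add: cA_upd cB_upd cC_upd ca_def cb_def cc_def)
        qed
      qed
      have "eqv (dom_pos k N star_adj (star_col a b) (insert 0 (insert v D)))
          (P (cA a (insert 0 (insert v D))) (cB a b (insert 0 (insert v D))) (cC a b c (insert 0 (insert v D))))"
      proof (rule Suc.IH)
        show "insert 0 (insert v D) \<subseteq> {..<N}" using Suc.prems(1) v N0 by auto
        show "0 \<in> insert 0 (insert v D) \<or> insert 0 (insert v D) = {}" by simp
        show "0 \<notin> insert 0 (insert v D) \<Longrightarrow> 1 \<le> cA a (insert 0 (insert v D)) + cB a b (insert 0 (insert v D)) + cC a b c (insert 0 (insert v D))" by simp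
        show "cA a (insert 0 (insert v D)) + cB a b (insert 0 (insert v D)) + cC a b c (insert 0 (insert v D)) \<le> k"
          using sum' Suc.prems(4) unfolding ca_def cb_def cc_def by linarith
      qed
      then show ?thesis using vD sum' D' by (simp add: f_def col_def)
    qed
    have cen: "\<not> cnbhd N star_adj 0 \<subseteq> D"
    proof
      assume "cnbhd N star_adj 0 \<subseteq> D"
      then have all: "{..<N} \<subseteq> D" using cnb0[OF N0] by simp
      have "ca = 0" unfolding ca_def cA_def using all assms by (intro card_eq_0_iff[THEN iffD2]) auto
      moreover have "cb = 0" unfolding cb_def cB_def using all assms by (intro card_eq_0_iff[THEN iffD2]) auto
      moreover have "cc = 0" unfolding cc_def cC_def using all assms by (intro card_eq_0_iff[THEN iffD2]) auto
      ultimately show False using False by simp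
    qed
    have f0: "f 0 = zero_g" unfolding f_def by (rule dom_full) (auto simp: cnb0[OF N0])
    have gl: "set (lo (dom_pos (Suc k) N star_adj (star_col a b) D)) = f ` {v. v < N \<and> col v \<in> {ColA, ColC} \<and> \<not> cnbhd N star_adj v \<subseteq> D}"
      by (auto simp: f_def col_def)
    have gr: "set (ro (dom_pos (Suc k) N star_adj (star_col a b) D)) = f ` {v. v < N \<and> col v \<in> {ColB, ColC} \<and> \<not> cnbhd N star_adj v \<subseteq> D}"
      by (auto simp: f_def col_def)
    have hl: "set (lo (P ca cb cc)) = insert zero_g ((if 0 < ca then {P (ca-1) cb cc} else {}) \<union> (if 0 < cc then {P ca cb (cc-1)} else {}))"
      using hnz by (rule P_lo)
    have hr: "set (ro (P ca cb cc)) = insert zero_g ((if 0 < cb then {P ca (cb-1) cc} else {}) \<union> (if 0 < cc then {P ca cb (cc-1)} else {}))"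
      using hnz by (rule P_ro)
    have colv: "col v = (if v = 0 then ColC else if v \<le> a then ColA else if v \<le> a + b then ColB else ColC)" for v
      by (simp add: col_def star_col_def)
    have mvA: "0 < ca \<and> eqv (f v) (P (ca-1) cb cc)" if v: "1 \<le> v" "v \<le> a" "v < N" "\<not> cnbhd N star_adj v \<subseteq> D" for v
    proof -
      have vD: "v \<notin> D" and e: "eqv (f v) (P (cA a (insert 0 (insert v D))) (cB a b (insert 0 (insert v D))) (cC a b c (insert 0 (insert v D))))"
        using mv[of v] v by auto
      have "0 < ca" using vD v unfolding ca_def cA_def by (intro card_pos_in[OF finA]) auto
      moreover have "cA a (insert 0 (insert v D)) = ca - 1" using v vD by (simp add: cA_upd ca_def)
      moreover have "cB a b (insert 0 (insert v D)) = cb" using v vD by (simp add: cB_upd cb_def)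
      moreover have "cC a b c (insert 0 (insert v D)) = cc" using v vD by (simp add: cC_upd cc_def)
      ultimately show ?thesis using e by simp
    qed
    have mvB: "0 < cb \<and> eqv (f v) (P ca (cb-1) cc)" if v: "a < v" "v \<le> a + b" "v < N" "\<not> cnbhd N star_adj v \<subseteq> D" for v
    proof -
      have vD: "v \<notin> D" and e: "eqv (f v) (P (cA a (insert 0 (insert v D))) (cB a b (insert 0 (insert v D))) (cC a b c (insert 0 (insert v D))))"
        using mv[of v] v by auto
      have "0 < cb" using vD v unfolding cb_def cB_def by (intro card_pos_in[OF finB]) auto
      moreover have "cA a (insert 0 (insert v D)) = ca" using v vD by (simp add: cA_upd ca_def)
      moreover have "cB a b (insert 0 (insert v D)) = cb - 1" using v vD by (simp add: cB_upd cb_def)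
      moreover have "cC a b c (insert 0 (insert v D)) = cc" using v vD by (simp add: cC_upd cc_def)
      ultimately show ?thesis using e by simp
    qed
    have mvC: "0 < cc \<and> eqv (f v) (P ca cb (cc-1))" if v: "a + b < v" "v < N" "\<not> cnbhd N star_adj v \<subseteq> D" for v
    proof -
      have v0: "0 < v" using v by simp
      have vD: "v \<notin> D" and e: "eqv (f v) (P (cA a (insert 0 (insert v D))) (cB a b (insert 0 (insert v D))) (cC a b c (insert 0 (insert v D))))"
        using mv[of v] v v0 by auto
      have vc: "v \<le> a + b + c" using v assms by simp
      have "0 < cc" using vD v vc unfolding cc_def cC_def by (intro card_pos_in[OF finC]) auto
      moreover have "cA a (insert 0 (insert v D)) = ca" using v vD by (simp add: cA_upd ca_def)
      moreover have "cB a b (insert 0 (insert v D)) = cb" using v vD by (simp add: cB_upd cb_def)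
      moreover have "cC a b c (insert 0 (insert v D)) = cc - 1" using v vD vc by (simp add: cC_upd cc_def)
      ultimately show ?thesis using e by simp
    qed
    have "eqv (dom_pos (Suc k) N star_adj (star_col a b) D) (P ca cb cc)"
    proof (rule eqv_opts)
      fix l assume "l \<in> set (lo (dom_pos (Suc k) N star_adj (star_col a b) D))"
      then obtain v where v: "v < N" "col v \<in> {ColA, ColC}" "\<not> cnbhd N star_adj v \<subseteq> D" and l: "l = f v"
        using gl by auto
      show "(\<exists>l'\<in>set (lo (P ca cb cc)). eqv l l') \<or> \<not> le (P ca cb cc) l"
      proof (cases "v = 0")
        case True then show ?thesis using l f0 hl eqv_refl by auto
      next
        case False
        then have "v \<le> a \<or> a + b < v" using v(2) colv[of v] by (auto split: if_splits)
        then show ?thesis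
        proof
          assume "v \<le> a"
          then have "0 < ca \<and> eqv (f v) (P (ca-1) cb cc)" using mvA[of v] v False by simp
          then show ?thesis using l hl by auto
        next
          assume "a + b < v"
          then have "0 < cc \<and> eqv (f v) (P ca cb (cc-1))" using mvC[of v] v by simp
          then show ?thesis using l hl by auto
        qed
      qed
    next
      fix l assume "l \<in> set (ro (dom_pos (Suc k) N star_adj (star_col a b) D))"
      then obtain v where v: "v < N" "col v \<in> {ColB, ColC}" "\<not> cnbhd N star_adj v \<subseteq> D" and l: "l = f v"
        using gr by auto
      show "(\<exists>l'\<in>set (ro (P ca cb cc)). eqv l l') \<or> \<not> le l (P ca cb cc)"
      proof (cases "v = 0")
        case True then show ?thesis using l f0 hr eqv_refl by auto
      next
        case False
        then have "(a < v \<and> v \<le> a + b) \<or> a + b < v" using v(2) colv[of v] by (auto split: if_splits)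
        then show ?thesis
        proof
          assume "a < v \<and> v \<le> a + b"
          then have "0 < cb \<and> eqv (f v) (P ca (cb-1) cc)" using mvB[of v] v by simp
          then show ?thesis using l hr by auto
        next
          assume "a + b < v"
          then have "0 < cc \<and> eqv (f v) (P ca cb (cc-1))" using mvC[of v] v by simp
          then show ?thesis using l hr by auto
        qed
      qed
    next
      fix l assume l: "l \<in> set (lo (P ca cb cc))"
      show "(\<exists>l'\<in>set (lo (dom_pos (Suc k) N star_adj (star_col a b) D)). eqv l l') \<or> \<not> le (dom_pos (Suc k) N star_adj (star_col a b) D) l"
      proof -
        consider "l = zero_g" | "0 < ca" "l = P (ca-1) cb cc" | "0 < cc" "l = P ca cb (cc-1)"
          using l hl by (auto split: if_splits)
        then show ?thesis
        proof cases
          case 1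
          have "f 0 \<in> set (lo (dom_pos (Suc k) N star_adj (star_col a b) D))"
            unfolding gl using cen N0 by (auto simp: colv)
          then show ?thesis using 1 f0 eqv_refl by metis
        next
          case 2
          then obtain v where "(1 \<le> v \<and> v \<le> a) \<and> v \<notin> D" using card_pos_ex[of "\<lambda>v. 1 \<le> v \<and> v \<le> a" D] unfolding ca_def cA_def by blast
          then have v: "1 \<le> v" "v \<le> a" "v \<notin> D" by auto
          have vN: "v < N" using v assms by simp
          have nc: "\<not> cnbhd N star_adj v \<subseteq> D" using v vN by (simp add: cnbv)
          have "f v \<in> set (lo (dom_pos (Suc k) N star_adj (star_col a b) D))"
            unfolding gl using v vN nc by (auto simp: colv)
          moreover have "eqv (f v) l" using mvA[of v] mvB[of v] v vN nc 2 by simp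
          ultimately show ?thesis using eqv_sym by blast
        next
          case 3
          then obtain v where "(a + b < v \<and> v \<le> a + b + c) \<and> v \<notin> D" using card_pos_ex[of "\<lambda>v. a + b < v \<and> v \<le> a + b + c" D] unfolding cc_def cC_def by blast
          then have v: "a + b < v" "v \<le> a + b + c" "v \<notin> D" by auto
          have vN: "v < N" using v assms by simp
          have nc: "\<not> cnbhd N star_adj v \<subseteq> D" using v vN by (simp add: cnbv)
          have "f v \<in> set (lo (dom_pos (Suc k) N star_adj (star_col a b) D))"
            unfolding gl using v vN nc by (auto simp: colv)
          moreover have "eqv (f v) l" using mvC[of v] v vN nc 3 by simp
          ultimately show ?thesis using eqv_sym by blast
        qed
      qed
    next
      fix l assume l: "l \<in> set (ro (P ca cb cc))"
      show "(\<exists>l'\<in>set (ro (dom_pos (Suc k) N star_adj (star_col a b) D)). eqv l l') \<or> \<not> le l (dom_pos (Suc k) N star_adj (star_col a b) D)"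
      proof -
        consider "l = zero_g" | "0 < cb" "l = P ca (cb-1) cc" | "0 < cc" "l = P ca cb (cc-1)"
          using l hr by (auto split: if_splits)
        then show ?thesis
        proof cases
          case 1
          have "f 0 \<in> set (ro (dom_pos (Suc k) N star_adj (star_col a b) D))"
            unfolding gr using cen N0 by (auto simp: colv)
          then show ?thesis using 1 f0 eqv_refl by metis
        next
          case 2
          then obtain v where "(a < v \<and> v \<le> a + b) \<and> v \<notin> D" using card_pos_ex[of "\<lambda>v. a < v \<and> v \<le> a + b" D] unfolding cb_def cB_def by blast
          then have v: "a < v" "v \<le> a + b" "v \<notin> D" by auto
          have vN: "v < N" using v assms by simp
          have nc: "\<not> cnbhd N star_adj v \<subseteq> D" using v vN by (simp add: cnbv)
          have "f v \<in> set (ro (dom_pos (Suc k) N star_adj (star_col a b) D))"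
            unfolding gr using v vN nc by (auto simp: colv)
          moreover have "eqv (f v) l" using mvA[of v] mvB[of v] v vN nc 2 by simp
          ultimately show ?thesis using eqv_sym by blast
        next
          case 3
          then obtain v where "(a + b < v \<and> v \<le> a + b + c) \<and> v \<notin> D" using card_pos_ex[of "\<lambda>v. a + b < v \<and> v \<le> a + b + c" D] unfolding cc_def cC_def by blast
          then have v: "a + b < v" "v \<le> a + b + c" "v \<notin> D" by auto
          have vN: "v < N" using v assms by simp
          have nc: "\<not> cnbhd N star_adj v \<subseteq> D" using v vN by (simp add: cnbv)
          have "f v \<in> set (ro (dom_pos (Suc k) N star_adj (star_col a b) D))"
            unfolding gr using v vN nc by (auto simp: colv)
          moreover have "eqv (f v) l" using mvC[of v] v vN nc 3 by simp
          ultimately show ?thesis using eqv_sym by blast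
        qed
      qed
    qed
    then show ?thesis by (simp add: ca_def cb_def cc_def)
  qed
qed

lemma star_eqP: "1 \<le> a + b \<Longrightarrow> eqv (star_game a b c) (P a b c)"
proof -
  assume ab: "1 \<le> a + b"
  have A: "cA a {} = a"
  proof -
    have "{v. (1 \<le> v \<and> v \<le> a) \<and> v \<notin> {}} = {1..a}" by auto
    then show ?thesis by (simp add: cA_def)
  qed
  have B: "cB a b {} = b"
  proof -
    have "{v. (a < v \<and> v \<le> a + b) \<and> v \<notin> {}} = {a<..a+b}" by auto
    then show ?thesis by (simp add: cB_def)
  qed
  have C: "cC a b c {} = c"
  proof -
    have "{v. (a + b < v \<and> v \<le> a + b + c) \<and> v \<notin> {}} = {a+b<..a+b+c}" by auto
    then show ?thesis by (simp add: cC_def)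
  qed
  have "eqv (dom_pos (a+b+c+1) (a+b+c+1) star_adj (star_col a b) {}) (P (cA a {}) (cB a b {}) (cC a b c {}))"
    by (rule pos[of "a+b+c+1" a b c]) (use ab A B C in auto)
  then show ?thesis by (simp add: star_game_def dom_game_def A B C)
qed

lemma Q_even: "0 < d \<Longrightarrow> eqv (P d 0 (2*k)) (P d 0 0)"
proof (induction k)
  case 0 then show ?case by (simp add: eqv_refl)
next
  case (Suc k)
  have "eqv (P d 0 (Suc (Suc (2*k)))) (P d 0 (2*k))" using L3 Suc.prems by blast
  then show ?case using Suc eqv_trans by simp
qed

lemma Q_odd: "0 < d \<Longrightarrow> eqv (P d 0 (2*k+1)) (P d 0 1)"
proof (induction k)
  case 0 then show ?case by (simp add: eqv_refl)
next
  case (Suc k)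
  have "eqv (P d 0 (Suc (Suc (2*k+1)))) (P d 0 (2*k+1))" using L3 Suc.prems by blast
  then show ?case using Suc eqv_trans by simp
qed

lemma Z_even: "eqv (P 0 0 (2*k+2)) (P 0 0 2)"
proof (induction k)
  case 0 then show ?case by (simp only: mult_0_right add_0 eqv_refl)
next
  case (Suc k)
  have "eqv (P 0 0 (Suc (Suc (Suc (2*k+1))))) (P 0 0 (Suc (2*k+1)))" by (rule L2)
  then show ?case using Suc eqv_trans by simp
qed

lemma Z_odd: "eqv (P 0 0 (2*k+1)) (P 0 0 1)"
proof (induction k)
  case 0 then show ?case by (simp add: eqv_refl)
next
  case (Suc k)
  have "eqv (P 0 0 (Suc (Suc (Suc (2*k))))) (P 0 0 (Suc (2*k)))" by (rule L2)
  then show ?case using Suc eqv_trans by simp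
qed

lemma red: "b \<le> a \<Longrightarrow> \<not> (a - b = 0 \<and> c = 0) \<Longrightarrow> eqv (P a b c) (P (a-b) 0 c)"
  using L1k[of "a-b" 0 c b] by simp

lemma Tcong: "eqv x y \<Longrightarrow> eqv (G [zero_g, x] [zero_g, x]) (G [zero_g, y] [zero_g, y])"
  by (rule eqv_opts) (auto intro: eqv_refl eqv_sym)

lemma P002_P110: "eqv (P 0 0 2) (P 1 1 0)"
proof -
  have e1: "eqv (P 0 0 1) (P 0 1 0)" by (rule starlike_eqv[OF lo_P001 ro_P001 lo_P010 ro_P010])
  have e2: "eqv (P 0 0 1) (P 1 0 0)" by (rule starlike_eqv[OF lo_P001 ro_P001 lo_P100 ro_P100])
  have l1: "set (lo (P 0 0 2)) = {zero_g, P 0 0 1}" "set (ro (P 0 0 2)) = {zero_g, P 0 0 1}"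
    by (simp_all add: lo00 ro00)
  have l2: "set (lo (P 1 1 0)) = {zero_g, P 0 1 0}" "set (ro (P 1 1 0)) = {zero_g, P 1 0 0}"
    by (simp_all add: P_lo P_ro)
  show ?thesis
    by (rule eqv_opts) (unfold l1 l2, use e1 e2 eqv_refl eqv_sym in auto)
qed

lemma even_case: "1 \<le> a + b \<Longrightarrow> eqv (P a b (2*k)) (P a b 0)"
proof -
  have main: "eqv (P a b (2*k)) (P a b 0)" if ab: "1 \<le> a + b" "b \<le> a" for a b
  proof (cases "b < a")
    case True
    then have "eqv (P a b (2*k)) (P (a-b) 0 (2*k))" "eqv (P a b 0) (P (a-b) 0 0)"
      using red by auto
    moreover have "eqv (P (a-b) 0 (2*k)) (P (a-b) 0 0)" using Q_even True by simp
    ultimately show ?thesis using eqv_trans eqv_sym by blast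
  next
    case False
    then have ab': "a = b" "0 < a" using ab by auto
    show ?thesis
    proof (cases k)
      case 0 then show ?thesis by (simp add: eqv_refl)
    next
      case (Suc j)
      have "eqv (P a b (2*k)) (P 0 0 (2*k))" using red[of b a "2*k"] ab' Suc by simp
      moreover have "eqv (P 0 0 (2*k)) (P 0 0 2)" using Z_even[of j] Suc by simp
      moreover have "eqv (P a b 0) (P 1 1 0)" using L1k[of 1 1 0 "a-1"] ab' by simp
      ultimately show ?thesis using P002_P110 eqv_trans eqv_sym by blast
    qed
  qed
  assume ab: "1 \<le> a + b"
  show ?thesis
  proof (cases "b \<le> a")
    case True then show ?thesis using main ab by blast
  next
    case False
    then have "eqv (P b a (2*k)) (P b a 0)" using main[of b a] ab by simp
    then have "eqv (gneg (P b a (2*k))) (gneg (P b a 0))" by (rule eqv_neg)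
    then show ?thesis by (simp add: P_neg)
  qed
qed

definition Tg :: "nat \<Rightarrow> pg" where
  "Tg m = G [zero_g, gplus (up_pow m) star_g] [zero_g, gplus (up_pow m) star_g]"

lemma odd_pos: "b < a \<Longrightarrow> eqv (P a b (2*k+1)) (Tg (a - b - 1))"
proof -
  assume ab: "b < a"
  define d where "d = a - b"
  have d: "0 < d" "a - b - 1 = d - 1" using ab by (auto simp: d_def)
  have "eqv (P a b (2*k+1)) (P d 0 (2*k+1))" using red[of b a] ab by (simp add: d_def)
  moreover have "eqv (P d 0 (2*k+1)) (P d 0 1)" using Q_odd d by simp
  moreover have "eqv (P d 0 1) (G [zero_g, P d 0 0] [zero_g, P d 0 0])" by (rule L6)
  moreover have "eqv (P d 0 0) (gplus (up_pow (d-1)) star_g)" using L4[of "d-1"] d by simp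
  ultimately show ?thesis unfolding Tg_def d(2) using Tcong eqv_trans by blast
qed

lemma odd_eq: "eqv (P a a (2*k+1)) star_g"
proof -
  have "eqv (P a a (2*k+1)) (P 0 0 (2*k+1))" using red[of a a] by simp
  moreover have "eqv (P 0 0 1) star_g" by (rule starlike_eqv[OF lo_P001 ro_P001 lo_star ro_star])
  ultimately show ?thesis using Z_odd eqv_trans by blast
qed

lemma Tg0: "Tg 0 = star2_g"
  by (simp add: Tg_def star2_g_def star_g_def zero_g_def)

lemma Tg_neg: "gneg (Tg m) = G [zero_g, gplus (down_pow m) star_g] [zero_g, gplus (down_pow m) star_g]"
  by (simp add: Tg_def gneg_gplus gneg_up star_g_def zero_g_def)


theorem theorem9:
  fixes a b c :: nat
  assumes "a + b \<ge> 1" and "c \<ge> 1"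
  shows "(even c \<longrightarrow> star_game a b c =\<^sub>g star_game a b 0)
       \<and> (odd c \<longrightarrow>
            (a = b \<longrightarrow> star_game a b c =\<^sub>g star_g)
          \<and> ((a = b + 1 \<or> b = a + 1) \<longrightarrow> star_game a b c =\<^sub>g star2_g)
          \<and> (a \<ge> b + 2 \<longrightarrow> star_game a b c =\<^sub>g
                G [zero_g, gplus (up_pow (a - b - 1)) star_g] [zero_g, gplus (up_pow (a - b - 1)) star_g])
          \<and> (b \<ge> a + 2 \<longrightarrow> star_game a b c =\<^sub>g
                G [zero_g, gplus (down_pow (b - a - 1)) star_g] [zero_g, gplus (down_pow (b - a - 1)) star_g]))"
proof -
  have SP: "eqv (star_game a b c) (P a b c)" using star_eqP assms(1) by blast
  have S0: "eqv (star_game a b 0) (P a b 0)" using star_eqP assms(1) by blast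
  have E: "star_game a b c =\<^sub>g star_game a b 0" if "even c"
  proof -
    obtain k where k: "c = 2*k" using \<open>even c\<close> by blast
    have "eqv (P a b c) (P a b 0)" using even_case[of a b k] assms(1) k by simp
    then show ?thesis unfolding game_eq_eqv using SP S0 eqv_trans eqv_sym by blast
  qed
  have O: "(a = b \<longrightarrow> star_game a b c =\<^sub>g star_g)
          \<and> ((a = b + 1 \<or> b = a + 1) \<longrightarrow> star_game a b c =\<^sub>g star2_g)
          \<and> (a \<ge> b + 2 \<longrightarrow> star_game a b c =\<^sub>g
                G [zero_g, gplus (up_pow (a - b - 1)) star_g] [zero_g, gplus (up_pow (a - b - 1)) star_g])
          \<and> (b \<ge> a + 2 \<longrightarrow> star_game a b c =\<^sub>g
                G [zero_g, gplus (down_pow (b - a - 1)) star_g] [zero_g, gplus (down_pow (b - a - 1)) star_g])"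
    if "odd c"
  proof -
    obtain k where k: "c = 2*k+1" using \<open>odd c\<close> oddE by blast
    have pos': "eqv (P a b c) (Tg (a - b - 1))" if "b < a" using odd_pos[of b a k] that k by simp
    have neg': "eqv (P a b c) (gneg (Tg (b - a - 1)))" if "a < b"
    proof -
      have "eqv (P b a c) (Tg (b - a - 1))" using odd_pos[of a b k] that k by simp
      then have "eqv (gneg (P b a c)) (gneg (Tg (b - a - 1)))" by (rule eqv_neg)
      then show ?thesis by (simp add: P_neg)
    qed
    have c1: "a = b \<longrightarrow> star_game a b c =\<^sub>g star_g"
      using odd_eq[of a k] SP k eqv_trans unfolding game_eq_eqv by blast
    have c2: "(a = b + 1 \<or> b = a + 1) \<longrightarrow> star_game a b c =\<^sub>g star2_g"
    proof
      assume h: "a = b + 1 \<or> b = a + 1"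
      have "eqv (P a b c) star2_g"
      proof (cases "a = b + 1")
        case True then show ?thesis using pos' Tg0 by simp
      next
        case False
        then have "b = a + 1" using h by simp
        moreover have "gneg star2_g = star2_g" by (simp add: star2_g_def star_g_def zero_g_def)
        ultimately show ?thesis using neg' Tg0 by simp
      qed
      then show "star_game a b c =\<^sub>g star2_g" unfolding game_eq_eqv using SP eqv_trans by blast
    qed
    have c3: "a \<ge> b + 2 \<longrightarrow> star_game a b c =\<^sub>g
                G [zero_g, gplus (up_pow (a - b - 1)) star_g] [zero_g, gplus (up_pow (a - b - 1)) star_g]"
      using pos' SP eqv_trans unfolding game_eq_eqv Tg_def by auto
    have c4: "b \<ge> a + 2 \<longrightarrow> star_game a b c =\<^sub>g
                G [zero_g, gplus (down_pow (b - a - 1)) star_g] [zero_g, gplus (down_pow (b - a - 1)) star_g]"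
    proof
      assume "b \<ge> a + 2"
      then have "eqv (P a b c) (gneg (Tg (b - a - 1)))" using neg' by simp
      then show "star_game a b c =\<^sub>g
                G [zero_g, gplus (down_pow (b - a - 1)) star_g] [zero_g, gplus (down_pow (b - a - 1)) star_g]"
        unfolding game_eq_eqv Tg_neg using SP eqv_trans by blast
    qed
    show ?thesis using c1 c2 c3 c4 by blast
  qed
  show ?thesis using E O by blast
qed

end
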